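(* Let $Q\subset\mathrm{EX}(M)$ and let $(\alpha,U),(\beta,V)\in S_Q$. Set $D_\alpha=(q|_{N_{(\alpha,U)}})^{-1}\big(q(N_{(\alpha,U)})\cap q(N_{(\beta,V)})\big)\subset N_{(\alpha,U)}$ and $D_\beta=(q|_{N_{(\beta,V)}})^{-1}\big(q(N_{(\alpha,U)})\cap q(N_{(\beta,V)})\big)\subset N_{(\beta,V)}$. Then the map $\overline{\beta\circ\alpha^{-1}}:D_\alpha\to D_\beta$, $\overline{\beta\circ\alpha^{-1}}(x)=(q|_{N_{(\beta,V)}})^{-1}\circ q|_{N_{(\alpha,U)}}(x)$, is a well-defined homeomorphism; $\alpha(\mathrm{dom}(\alpha)\cap\mathrm{dom}(\beta))\subset D_\alpha$ and $\overline{\beta\circ\alpha^{-1}}$ restricted to $\alpha(\mathrm{dom}(\alpha)\cap\mathrm{dom}(\beta))$ equals $\beta\circ\alpha^{-1}$; and for $x\in N_{(\alpha,U)}$, $y\in N_{(\beta,V)}$ one has $\overline{\beta\circ\alpha^{-1}}(x)=y$ if and only if $q(x)=q(y)$, i.e. iff either $\beta\circ\alpha^{-1}(x)=y$ or $(\alpha,U,\{x\})\equiv(\beta,V,\{y\})$.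
   Context: Conventions: $M$ is an $n$-dimensional smooth manifold (Hausdorff, second countable) with maximal $C^\infty$ atlas $\mathcal{A}(M)$; every chart $\alpha$ has open domain $\mathrm{dom}(\alpha)\subset M$ and open range $\mathrm{ran}(\alpha)\subset\mathbb{R}^n$. For $A\subset\mathbb{R}^n$, $\partial A$ is its boundary in $\mathbb{R}^n$; for $A\subset U\subset\mathbb{R}^n$, $\partial_U A$ is the boundary of $A$ relative to $U$. An admissible boundary point of $\alpha$ is a $p\in\partial\,\mathrm{ran}(\alpha)$ such that every sequence $(x_i)\subset\mathrm{dom}(\alpha)$ with $\alpha(x_i)\to p$ has no accumulation point in $M$; $B(\alpha)$ is the set of these. An extension is a pair $(\alpha,U)$, $U\subset\mathbb{R}^n$ open, $\mathrm{ran}(\alpha)\subset U$, $\emptyset\ne\partial_U\mathrm{ran}(\alpha)\subset B(\alpha)$; $\mathrm{EX}(M)$ is the set of extensions. A boundary set is $(\alpha,U,V)$ with $(\alpha,U)\in\mathrm{EX}(M)$, $V\subset B(\alpha)\cap U$ (a boundary point if $V=\{p\}$). $(\alpha,U,V)$ covers $(\beta,X,Y)$ if for every sequence $(y_i)\subset\mathrm{dom}(\beta)$ with $(\beta(y_i))$ having an accumulation point in $Y$ there is a subsequence $(v_i)\subset\mathrm{dom}(\alpha)$ of $(y_i)$ with $(\alpha(v_i))$ having an accumulation point in $V$; they are equivalent, $\equiv$, if each covers the other. Completion: for $Q\subset\mathrm{EX}(M)$ let $P=\{(\alpha,\mathrm{ran}(\alpha)):\alpha\in\mathcal{A}(M)\}$,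 $S_Q=P\cup Q$, $N_{(\alpha,U)}=\mathrm{ran}(\alpha)\cup\partial_U\mathrm{ran}(\alpha)$ with subspace topology of $\mathbb{R}^n$, $N_Q=\bigsqcup_{(\alpha,U)\in S_Q}N_{(\alpha,U)}$ with disjoint-union topology. Identify $x\in N_{(\alpha,U)}$ with $y\in N_{(\beta,X)}$ iff either $x\in\mathrm{ran}(\alpha)$, $y\in\mathrm{ran}(\beta)$, $\beta\circ\alpha^{-1}(x)=y$, or $x\in\partial_U\mathrm{ran}(\alpha)$, $y\in\partial_X\mathrm{ran}(\beta)$, $(\alpha,U,\{x\})\equiv(\beta,X,\{y\})$. $Q(M)$ is the quotient space and $q:N_Q\to Q(M)$ the quotient map. *)

theory Defs
  imports "HOL-Analysis.Analysis"
begin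

text \<open>Smooth manifolds: the manifold M is the whole type 'm (Hausdorff, second countable);
  a chart is a partial map 'm to real^'n (n = CARD('n)), represented as a map
  'm => (real^'n) option, so dom and ran are Map.dom and Map.ran.\<close>

type_synonym ('m, 'n) chart = "'m \<Rightarrow> (real ^ 'n) option"

definition chart_fun :: "('m, 'n) chart \<Rightarrow> 'm \<Rightarrow> real ^ 'n" where
  "chart_fun \<alpha> x = the (\<alpha> x)"

definition chart_inv :: "('m, 'n) chart \<Rightarrow> real ^ 'n \<Rightarrow> 'm" where
  "chart_inv \<alpha> = inv_into (dom \<alpha>) (chart_fun \<alpha>)"

definition is_chart :: "('m::topological_space, 'n::finite) chart \<Rightarrow> bool" where
  "is_chart \<alpha> \<longleftrightarrow> open (dom \<alpha>) \<and> open (ran \<alpha>) \<and>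
     (\<exists>g. homeomorphism (dom \<alpha>) (ran \<alpha>) (chart_fun \<alpha>) g)"

text \<open>Iterated directional derivatives; smoothness (C-infinity) on an open set means all of
  them exist and are differentiable.\<close>

fun iter_dderiv :: "('a::real_normed_vector \<Rightarrow> 'b::real_normed_vector) \<Rightarrow> 'a list \<Rightarrow> 'a \<Rightarrow> 'b" where
  "iter_dderiv f [] = f"
| "iter_dderiv f (v # vs) = (\<lambda>x. frechet_derivative (iter_dderiv f vs) (at x) v)"

definition smooth_on :: "'a::real_normed_vector set \<Rightarrow> ('a \<Rightarrow> 'b::real_normed_vector) \<Rightarrow> bool" where
  "smooth_on S f \<longleftrightarrow> (\<forall>vs. iter_dderiv f vs differentiable_on S)"

definition transition :: "('m, 'n) chart \<Rightarrow> ('m, 'n) chart \<Rightarrow> real ^ 'n \<Rightarrow> real ^ 'n" where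
  "transition \<alpha> \<beta> = chart_fun \<beta> \<circ> chart_inv \<alpha>"

definition overlap_img :: "('m, 'n) chart \<Rightarrow> ('m, 'n) chart \<Rightarrow> (real ^ 'n) set" where
  "overlap_img \<alpha> \<beta> = chart_fun \<alpha> ` (dom \<alpha> \<inter> dom \<beta>)"

definition smoothly_compatible :: "('m::topological_space, 'n::finite) chart \<Rightarrow> ('m, 'n) chart \<Rightarrow> bool" where
  "smoothly_compatible \<alpha> \<beta> \<longleftrightarrow>
     smooth_on (overlap_img \<alpha> \<beta>) (transition \<alpha> \<beta>) \<and>
     smooth_on (overlap_img \<beta> \<alpha>) (transition \<beta> \<alpha>)"

definition maximal_smooth_atlas :: "('m::topological_space, 'n::finite) chart set \<Rightarrow> bool" where
  "maximal_smooth_atlas A \<longleftrightarrow>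
     (\<forall>\<alpha>\<in>A. is_chart \<alpha>) \<and> (\<Union>\<alpha>\<in>A. dom \<alpha>) = UNIV \<and>
     (\<forall>\<alpha>\<in>A. \<forall>\<beta>\<in>A. smoothly_compatible \<alpha> \<beta>) \<and>
     (\<forall>\<alpha>. is_chart \<alpha> \<and> (\<forall>\<beta>\<in>A. smoothly_compatible \<alpha> \<beta>) \<longrightarrow> \<alpha> \<in> A)"

definition acc_point :: "(nat \<Rightarrow> 'a::topological_space) \<Rightarrow> 'a \<Rightarrow> bool" where
  "acc_point s p \<longleftrightarrow> (\<forall>S. open S \<longrightarrow> p \<in> S \<longrightarrow> (\<exists>\<^sub>F i in sequentially. s i \<in> S))"

definition adm_boundary :: "('m::topological_space, 'n::finite) chart \<Rightarrow> (real ^ 'n) set" where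
  "adm_boundary \<alpha> = {p \<in> frontier (ran \<alpha>).
     \<forall>x. (\<forall>i. x i \<in> dom \<alpha>) \<and> ((\<lambda>i. chart_fun \<alpha> (x i)) \<longlonglongrightarrow> p) \<longrightarrow> \<not> (\<exists>z. acc_point x z)}"

definition rel_bdry :: "(real ^ 'n) set \<Rightarrow> (real ^ 'n) set \<Rightarrow> (real ^ 'n) set" where
  "rel_bdry U A = (top_of_set U) frontier_of A"

definition EXT :: "('m::topological_space, 'n::finite) chart set \<Rightarrow> (('m, 'n) chart \<times> (real ^ 'n) set) set" where
  "EXT A = {(\<alpha>, U). \<alpha> \<in> A \<and> open U \<and> ran \<alpha> \<subseteq> U \<and> rel_bdry U (ran \<alpha>) \<noteq> {} \<and>
              rel_bdry U (ran \<alpha>) \<subseteq> adm_boundary \<alpha>}"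

definition covers :: "('m::topological_space, 'n::finite) chart \<times> (real ^ 'n) set \<times> (real ^ 'n) set
     \<Rightarrow> ('m, 'n) chart \<times> (real ^ 'n) set \<times> (real ^ 'n) set \<Rightarrow> bool" where
  "covers a b = (case a of (\<alpha>, U, V) \<Rightarrow> case b of (\<beta>, X, Y) \<Rightarrow>
     (\<forall>y. (\<forall>i. y i \<in> dom \<beta>) \<and> (\<exists>p\<in>Y. acc_point (\<lambda>i. chart_fun \<beta> (y i)) p) \<longrightarrow>
        (\<exists>r. strict_mono r \<and> (\<forall>i. y (r i) \<in> dom \<alpha>) \<and>
             (\<exists>p\<in>V. acc_point (\<lambda>i. chart_fun \<alpha> (y (r i))) p))))"

definition bequiv :: "('m::topological_space, 'n::finite) chart \<times> (real ^ 'n) set \<times> (real ^ 'n) set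
     \<Rightarrow> ('m, 'n) chart \<times> (real ^ 'n) set \<times> (real ^ 'n) set \<Rightarrow> bool" where
  "bequiv a b \<longleftrightarrow> covers a b \<and> covers b a"

definition S_Q :: "('m::topological_space, 'n::finite) chart set \<Rightarrow> (('m, 'n) chart \<times> (real ^ 'n) set) set
     \<Rightarrow> (('m, 'n) chart \<times> (real ^ 'n) set) set" where
  "S_Q A Q = {(\<alpha>, ran \<alpha>) | \<alpha>. \<alpha> \<in> A} \<union> Q"

definition Nset :: "('m, 'n) chart \<times> (real ^ 'n) set \<Rightarrow> (real ^ 'n) set" where
  "Nset s = (case s of (\<alpha>, U) \<Rightarrow> ran \<alpha> \<union> rel_bdry U (ran \<alpha>))"

text \<open>Points of the disjoint union N_Q: pairs (index, point).\<close>

definition N_Q :: "('m::topological_space, 'n::finite) chart set \<Rightarrow> (('m, 'n) chart \<times> (real ^ 'n) set) set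
     \<Rightarrow> ((('m, 'n) chart \<times> (real ^ 'n) set) \<times> (real ^ 'n)) set" where
  "N_Q A Q = {(s, x). s \<in> S_Q A Q \<and> x \<in> Nset s}"

definition ident_cond :: "('m::topological_space, 'n::finite) chart \<times> (real ^ 'n) set \<Rightarrow> real ^ 'n
     \<Rightarrow> ('m, 'n) chart \<times> (real ^ 'n) set \<Rightarrow> real ^ 'n \<Rightarrow> bool" where
  "ident_cond s x t y = (case s of (\<alpha>, U) \<Rightarrow> case t of (\<beta>, X) \<Rightarrow>
     (x \<in> ran \<alpha> \<and> y \<in> ran \<beta> \<and> x \<in> overlap_img \<alpha> \<beta> \<and> transition \<alpha> \<beta> x = y) \<or>
     (x \<in> rel_bdry U (ran \<alpha>) \<and> y \<in> rel_bdry X (ran \<beta>) \<and> bequiv (\<alpha>, U, {x}) (\<beta>, X, {y})))"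

definition ident :: "('m::topological_space, 'n::finite) chart set \<Rightarrow> (('m, 'n) chart \<times> (real ^ 'n) set) set
     \<Rightarrow> (('m, 'n) chart \<times> (real ^ 'n) set) \<times> (real ^ 'n)
     \<Rightarrow> (('m, 'n) chart \<times> (real ^ 'n) set) \<times> (real ^ 'n) \<Rightarrow> bool" where
  "ident A Q p p' \<longleftrightarrow> p \<in> N_Q A Q \<and> p' \<in> N_Q A Q \<and> ident_cond (fst p) (snd p) (fst p') (snd p')"

text \<open>The quotient map q : N_Q -> Q(M) (to classes of the equivalence relation generated
  by the identification).\<close>

definition qmap :: "('m::topological_space, 'n::finite) chart set \<Rightarrow> (('m, 'n) chart \<times> (real ^ 'n) set) set
     \<Rightarrow> (('m, 'n) chart \<times> (real ^ 'n) set) \<times> (real ^ 'n)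
     \<Rightarrow> ((('m, 'n) chart \<times> (real ^ 'n) set) \<times> (real ^ 'n)) set" where
  "qmap A Q p = {p' \<in> N_Q A Q. equivclp (ident A Q) p p'}"

definition Dset :: "('m::topological_space, 'n::finite) chart set \<Rightarrow> (('m, 'n) chart \<times> (real ^ 'n) set) set
     \<Rightarrow> ('m, 'n) chart \<times> (real ^ 'n) set \<Rightarrow> ('m, 'n) chart \<times> (real ^ 'n) set \<Rightarrow> (real ^ 'n) set" where
  "Dset A Q s t = {x \<in> Nset s. qmap A Q (s, x) \<in>
      (\<lambda>x. qmap A Q (s, x)) ` Nset s \<inter> (\<lambda>y. qmap A Q (t, y)) ` Nset t}"

definition trans_bar :: "('m::topological_space, 'n::finite) chart set \<Rightarrow> (('m, 'n) chart \<times> (real ^ 'n) set) set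
     \<Rightarrow> ('m, 'n) chart \<times> (real ^ 'n) set \<Rightarrow> ('m, 'n) chart \<times> (real ^ 'n) set \<Rightarrow> real ^ 'n \<Rightarrow> real ^ 'n" where
  "trans_bar A Q s t x = (THE y. y \<in> Nset t \<and> qmap A Q (t, y) = qmap A Q (s, x))"

end

theory Submission
  imports Defs
begin


lemma chart_homeo:
  assumes "is_chart \<alpha>"
  shows "homeomorphism (dom \<alpha>) (ran \<alpha>) (chart_fun \<alpha>) (chart_inv \<alpha>)"
proof -
  obtain g where h: "homeomorphism (dom \<alpha>) (ran \<alpha>) (chart_fun \<alpha>) g"
    using assms unfolding is_chart_def by blast
  have inj: "inj_on (chart_fun \<alpha>) (dom \<alpha>)"
    using h unfolding homeomorphism_def by (metis inj_on_inverseI)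
  have eq: "\<forall>y\<in>ran \<alpha>. chart_inv \<alpha> y = g y"
  proof
    fix y assume y: "y \<in> ran \<alpha>"
    then have "g y \<in> dom \<alpha>" "chart_fun \<alpha> (g y) = y" using h unfolding homeomorphism_def by auto
    then show "chart_inv \<alpha> y = g y" unfolding chart_inv_def using inj by (metis inv_into_f_f)
  qed
  have h2: "homeomorphism (dom \<alpha>) (ran \<alpha>) (chart_fun \<alpha>) g" by fact
  show ?thesis
  proof (rule homeomorphismI)
    show "continuous_on (dom \<alpha>) (chart_fun \<alpha>)" using h by (simp add: homeomorphism_def)
    show "continuous_on (ran \<alpha>) (chart_inv \<alpha>)"
      using h eq continuous_on_cong unfolding homeomorphism_def by metis
    show "chart_fun \<alpha> ` dom \<alpha> \<subseteq> ran \<alpha>" using h by (simp add: homeomorphism_def)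
    show "chart_inv \<alpha> ` ran \<alpha> \<subseteq> dom \<alpha>" using h eq unfolding homeomorphism_def by auto
    show "\<And>x. x \<in> dom \<alpha> \<Longrightarrow> chart_inv \<alpha> (chart_fun \<alpha> x) = x"
      using h eq unfolding homeomorphism_def by (metis imageI)
    show "\<And>y. y \<in> ran \<alpha> \<Longrightarrow> chart_fun \<alpha> (chart_inv \<alpha> y) = y"
      using h eq unfolding homeomorphism_def by auto
  qed
qed

lemma chart_facts:
  assumes "is_chart \<alpha>"
  shows "chart_fun \<alpha> ` dom \<alpha> = ran \<alpha>" "chart_inv \<alpha> ` ran \<alpha> = dom \<alpha>"
    "\<And>m. m \<in> dom \<alpha> \<Longrightarrow> chart_inv \<alpha> (chart_fun \<alpha> m) = m"
    "\<And>y. y \<in> ran \<alpha> \<Longrightarrow> chart_fun \<alpha> (chart_inv \<alpha> y) = y"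
    "continuous_on (dom \<alpha>) (chart_fun \<alpha>)" "continuous_on (ran \<alpha>) (chart_inv \<alpha>)"
    "open (dom \<alpha>)" "open (ran \<alpha>)"
  using chart_homeo[OF assms] assms unfolding homeomorphism_def is_chart_def by auto

lemma chart_fun_in: "is_chart \<alpha> \<Longrightarrow> m \<in> dom \<alpha> \<Longrightarrow> chart_fun \<alpha> m \<in> ran \<alpha>"
  using chart_facts(1) by blast

lemma chart_inv_in: "is_chart \<alpha> \<Longrightarrow> y \<in> ran \<alpha> \<Longrightarrow> chart_inv \<alpha> y \<in> dom \<alpha>"
  using chart_facts(2) by blast

lemma overlap_iff:
  assumes "is_chart \<alpha>"
  shows "x \<in> overlap_img \<alpha> \<beta> \<longleftrightarrow> x \<in> ran \<alpha> \<and> chart_inv \<alpha> x \<in> dom \<beta>"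
proof
  assume "x \<in> overlap_img \<alpha> \<beta>"
  then obtain m where "m \<in> dom \<alpha>" "m \<in> dom \<beta>" "x = chart_fun \<alpha> m" unfolding overlap_img_def by auto
  then show "x \<in> ran \<alpha> \<and> chart_inv \<alpha> x \<in> dom \<beta>" using chart_facts[OF assms] by auto
next
  assume "x \<in> ran \<alpha> \<and> chart_inv \<alpha> x \<in> dom \<beta>"
  then show "x \<in> overlap_img \<alpha> \<beta>" unfolding overlap_img_def using chart_facts[OF assms]
    by (metis IntI image_eqI chart_inv_in assms)
qed

lemma overlap_open:
  assumes "is_chart \<alpha>" "is_chart \<beta>"
  shows "open (overlap_img \<alpha> \<beta>)"
proof -
  have "openin (top_of_set (dom \<alpha>)) (dom \<alpha> \<inter> dom \<beta>)"
    using chart_facts(7)[OF assms(2)] by (auto simp: openin_open)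
  then have "openin (top_of_set (ran \<alpha>)) (overlap_img \<alpha> \<beta>)"
    unfolding overlap_img_def using homeomorphism_imp_open_map[OF chart_homeo[OF assms(1)]] by blast
  then show ?thesis using chart_facts(8)[OF assms(1)] openin_open_trans by blast
qed

lemma transition_cont:
  assumes "is_chart \<alpha>" "is_chart \<beta>"
  shows "continuous_on (overlap_img \<alpha> \<beta>) (transition \<alpha> \<beta>)"
  unfolding transition_def
proof (rule continuous_on_compose)
  show "continuous_on (overlap_img \<alpha> \<beta>) (chart_inv \<alpha>)"
    by (rule continuous_on_subset[OF chart_facts(6)[OF assms(1)]]) (auto simp: overlap_iff[OF assms(1)])
  show "continuous_on (chart_inv \<alpha> ` overlap_img \<alpha> \<beta>) (chart_fun \<beta>)"
    by (rule continuous_on_subset[OF chart_facts(5)[OF assms(2)]]) (auto simp: overlap_iff[OF assms(1)])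
qed

lemma rel_bdry_sub:
  assumes "open R" "R \<subseteq> U"
  shows "rel_bdry U R \<subseteq> closure R - R"
proof -
  have "openin (top_of_set U) R" using assms by (auto simp: openin_open)
  then have "rel_bdry U R = top_of_set U closure_of R - R"
    unfolding rel_bdry_def by (rule frontier_of_openin)
  also have "\<dots> \<subseteq> closure R - R"
    using closure_of_subtopology_subset[of euclidean U R] by auto
  finally show ?thesis .
qed



lemma tendsto_acc: "(X \<longlongrightarrow> p) sequentially \<Longrightarrow> acc_point X p"
  unfolding acc_point_def
proof (intro allI impI)
  fix S assume "(X \<longlongrightarrow> p) sequentially" "open S" "p \<in> S"
  then have "eventually (\<lambda>i. X i \<in> S) sequentially" by (rule topological_tendstoD)
  then show "frequently (\<lambda>i. X i \<in> S) sequentially"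
    using eventually_frequently[OF trivial_limit_sequentially] by blast
qed

lemma acc_unique:
  fixes X :: "nat \<Rightarrow> 'a::t2_space"
  assumes "X \<longlonglongrightarrow> p" "acc_point X q" shows "p = q"
proof (rule ccontr)
  assume "p \<noteq> q"
  from hausdorff[OF this] obtain S T where ST: "open S" "open T" "p \<in> S" "q \<in> T" "S \<inter> T = {}"
    by blast
  have e: "eventually (\<lambda>i. X i \<in> S) sequentially" using topological_tendstoD[OF assms(1) ST(1,3)] .
  have f: "frequently (\<lambda>i. X i \<in> T) sequentially" using assms(2) ST(2,4) unfolding acc_point_def by blast
  have "frequently (\<lambda>i. X i \<in> S \<and> X i \<in> T) sequentially"
    by (rule frequently_mp[OF eventually_mono[OF e] f]) auto
  then obtain i where "X i \<in> S" "X i \<in> T" using frequently_ex by blast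
  then show False using ST(5) by blast
qed

lemma covers_refl: "covers (\<alpha>, U, V) (\<alpha>, U, V)"
  unfolding covers_def
proof (simp only: prod.case, intro allI impI)
  fix y assume "(\<forall>i. y i \<in> dom \<alpha>) \<and> (\<exists>p\<in>V. acc_point (\<lambda>i. chart_fun \<alpha> (y i)) p)"
  then show "\<exists>r. strict_mono r \<and> (\<forall>i. y (r i) \<in> dom \<alpha>) \<and> (\<exists>p\<in>V. acc_point (\<lambda>i. chart_fun \<alpha> (y (r i))) p)"
    by (intro exI[of _ id]) (simp add: strict_mono_def)
qed

lemma covers_trans:
  assumes "covers (\<alpha>, U, X) (\<beta>, V, Y)" "covers (\<beta>, V, Y) (\<gamma>, W, Z)"
  shows "covers (\<alpha>, U, X) (\<gamma>, W, Z)"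
proof -
  have A: "\<And>y. (\<forall>i. y i \<in> dom \<beta>) \<Longrightarrow> (\<exists>p\<in>Y. acc_point (\<lambda>i. chart_fun \<beta> (y i)) p) \<Longrightarrow>
        (\<exists>r. strict_mono r \<and> (\<forall>i. y (r i) \<in> dom \<alpha>) \<and>
             (\<exists>p\<in>X. acc_point (\<lambda>i. chart_fun \<alpha> (y (r i))) p))"
    using assms(1) unfolding covers_def by simp
  have B: "\<And>y. (\<forall>i. y i \<in> dom \<gamma>) \<Longrightarrow> (\<exists>p\<in>Z. acc_point (\<lambda>i. chart_fun \<gamma> (y i)) p) \<Longrightarrow>
        (\<exists>r. strict_mono r \<and> (\<forall>i. y (r i) \<in> dom \<beta>) \<and>
             (\<exists>p\<in>Y. acc_point (\<lambda>i. chart_fun \<beta> (y (r i))) p))"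
    using assms(2) unfolding covers_def by simp
  show ?thesis unfolding covers_def
  proof (simp only: prod.case, intro allI impI)
    fix y assume y: "(\<forall>i. y i \<in> dom \<gamma>) \<and> (\<exists>p\<in>Z. acc_point (\<lambda>i. chart_fun \<gamma> (y i)) p)"
    then obtain r where r: "strict_mono r" "\<forall>i. y (r i) \<in> dom \<beta>" "\<exists>p\<in>Y. acc_point (\<lambda>i. chart_fun \<beta> (y (r i))) p"
      using B by blast
    from A[of "\<lambda>i. y (r i)", OF r(2) r(3)] obtain r2 where r2: "strict_mono r2" "\<forall>i. y (r (r2 i)) \<in> dom \<alpha>"
       "\<exists>p\<in>X. acc_point (\<lambda>i. chart_fun \<alpha> (y (r (r2 i)))) p" by blast
    have "strict_mono (r \<circ> r2)" using r(1) r2(1) by (simp add: strict_mono_def)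
    then show "\<exists>r. strict_mono r \<and> (\<forall>i. y (r i) \<in> dom \<alpha>) \<and> (\<exists>p\<in>X. acc_point (\<lambda>i. chart_fun \<alpha> (y (r i))) p)"
      using r2 by (intro exI[of _ "r \<circ> r2"]) simp
  qed
qed

lemma bequiv_refl: "bequiv a a"
proof -
  obtain a1 a2 a3 where e: "a = (a1,a2,a3)" by (metis prod_cases3)
  show ?thesis unfolding bequiv_def e using covers_refl by simp
qed

lemma bequiv_sym: "bequiv a b \<Longrightarrow> bequiv b a"
  unfolding bequiv_def by simp

lemma bequiv_trans: "bequiv a b \<Longrightarrow> bequiv b c \<Longrightarrow> bequiv a c"
  unfolding bequiv_def
proof -
  assume h: "covers a b \<and> covers b a" "covers b c \<and> covers c b"
  obtain a1 a2 a3 b1 b2 b3 c1 c2 c3 where e: "a = (a1,a2,a3)" "b = (b1,b2,b3)" "c = (c1,c2,c3)"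
    by (metis prod_cases3)
  show "covers a c \<and> covers c a" using h unfolding e using covers_trans by blast
qed

lemma seq_to_closure:
  assumes "is_chart \<beta>" "y \<in> closure (ran \<beta>)"
  shows "\<exists>m. (\<forall>i. m i \<in> dom \<beta>) \<and> (\<lambda>i. chart_fun \<beta> (m i)) \<longlonglongrightarrow> y"
proof -
  obtain z where z: "\<forall>n. z n \<in> ran \<beta>" "z \<longlonglongrightarrow> y" using assms(2) closure_sequential by blast
  have "\<forall>i. chart_inv \<beta> (z i) \<in> dom \<beta>" using z(1) chart_inv_in[OF assms(1)] by blast
  moreover have "(\<lambda>i. chart_fun \<beta> (chart_inv \<beta> (z i))) = z"
    using z(1) chart_facts(4)[OF assms(1)] by auto
  ultimately show ?thesis using z(2) by (intro exI[of _ "\<lambda>i. chart_inv \<beta> (z i)"]) simp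
qed



definition goodS :: "('m::topological_space, 'n::finite) chart \<times> (real ^ 'n) set \<Rightarrow> bool" where
  "goodS s \<longleftrightarrow> is_chart (fst s) \<and> ran (fst s) \<subseteq> snd s"

lemma goodS_bdry:
  assumes "goodS (\<alpha>, U)" "x \<in> rel_bdry U (ran \<alpha>)"
  shows "x \<notin> ran \<alpha>" "x \<in> closure (ran \<alpha>)"
  using rel_bdry_sub[of "ran \<alpha>" U] assms chart_facts(8)[of \<alpha>] unfolding goodS_def by auto

lemma ident_cond_mem:
  "ident_cond (\<alpha>, U) x (\<beta>, V) y \<Longrightarrow> x \<in> Nset (\<alpha>, U) \<and> y \<in> Nset (\<beta>, V)"
  unfolding ident_cond_def Nset_def by auto

lemma ident_cond_refl:
  assumes "goodS (\<alpha>, U)" "x \<in> Nset (\<alpha>, U)"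
  shows "ident_cond (\<alpha>, U) x (\<alpha>, U) x"
proof -
  have c: "is_chart \<alpha>" using assms unfolding goodS_def by simp
  show ?thesis
  proof (cases "x \<in> ran \<alpha>")
    case True
    then show ?thesis unfolding ident_cond_def using overlap_iff[OF c] chart_inv_in[OF c] chart_facts(4)[OF c]
      by (simp add: transition_def)
  next
    case False
    then show ?thesis using assms(2) unfolding ident_cond_def Nset_def by (auto simp: bequiv_refl)
  qed
qed

lemma ident_cond_sym:
  assumes "goodS (\<alpha>, U)" "goodS (\<beta>, V)" "ident_cond (\<alpha>, U) x (\<beta>, V) y"
  shows "ident_cond (\<beta>, V) y (\<alpha>, U) x"
proof -
  have ca: "is_chart \<alpha>" and cb: "is_chart \<beta>" using assms unfolding goodS_def by auto
  show ?thesis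
  proof (cases "x \<in> ran \<alpha> \<and> y \<in> ran \<beta> \<and> x \<in> overlap_img \<alpha> \<beta> \<and> transition \<alpha> \<beta> x = y")
    case True
    define m where "m = chart_inv \<alpha> x"
    have m: "m \<in> dom \<alpha>" "m \<in> dom \<beta>" "chart_fun \<alpha> m = x" "chart_fun \<beta> m = y"
      using True overlap_iff[OF ca] chart_inv_in[OF ca] chart_facts(4)[OF ca]
      unfolding m_def transition_def by auto
    have "chart_inv \<beta> y = m" using m chart_facts(3)[OF cb] by metis
    then have "y \<in> overlap_img \<beta> \<alpha> \<and> transition \<beta> \<alpha> y = x"
      using m True overlap_iff[OF cb] by (simp add: transition_def)
    then show ?thesis using True unfolding ident_cond_def by simp
  next
    case False
    then have "x \<in> rel_bdry U (ran \<alpha>) \<and> y \<in> rel_bdry V (ran \<beta>) \<and> bequiv (\<alpha>, U, {x}) (\<beta>, V, {y})"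
      using assms(3) unfolding ident_cond_def by auto
    then show ?thesis unfolding ident_cond_def using bequiv_sym by blast
  qed
qed

lemma ident_cond_trans:
  assumes "goodS (\<alpha>, U)" "goodS (\<beta>, V)" "goodS (\<gamma>, W)"
    "ident_cond (\<alpha>, U) x (\<beta>, V) y" "ident_cond (\<beta>, V) y (\<gamma>, W) z"
  shows "ident_cond (\<alpha>, U) x (\<gamma>, W) z"
proof -
  have ca: "is_chart \<alpha>" and cb: "is_chart \<beta>" and cc: "is_chart \<gamma>" using assms unfolding goodS_def by auto
  show ?thesis
  proof (cases "y \<in> ran \<beta>")
    case True
    then have nb: "y \<notin> rel_bdry V (ran \<beta>)" using goodS_bdry[OF assms(2)] by blast
    then have h1: "x \<in> ran \<alpha> \<and> x \<in> overlap_img \<alpha> \<beta> \<and> transition \<alpha> \<beta> x = y"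
      and h2: "z \<in> ran \<gamma> \<and> y \<in> overlap_img \<beta> \<gamma> \<and> transition \<beta> \<gamma> y = z"
      using assms(4,5) unfolding ident_cond_def by auto
    define m where "m = chart_inv \<alpha> x"
    have m: "m \<in> dom \<alpha>" "m \<in> dom \<beta>" "chart_fun \<alpha> m = x" "chart_fun \<beta> m = y"
      using h1 overlap_iff[OF ca] chart_inv_in[OF ca] chart_facts(4)[OF ca]
      unfolding m_def transition_def by auto
    have "chart_inv \<beta> y = m" using m chart_facts(3)[OF cb] by metis
    then have "m \<in> dom \<gamma>" "chart_fun \<gamma> m = z" using h2 overlap_iff[OF cb] by (auto simp: transition_def)
    then have "x \<in> overlap_img \<alpha> \<gamma> \<and> transition \<alpha> \<gamma> x = z"
      using m h1 overlap_iff[OF ca] by (auto simp: transition_def m_def)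
    then show ?thesis using h1 h2 unfolding ident_cond_def by simp
  next
    case False
    then have "x \<in> rel_bdry U (ran \<alpha>) \<and> y \<in> rel_bdry V (ran \<beta>) \<and> bequiv (\<alpha>, U, {x}) (\<beta>, V, {y})"
      "z \<in> rel_bdry W (ran \<gamma>) \<and> bequiv (\<beta>, V, {y}) (\<gamma>, W, {z})"
      using assms(4,5) unfolding ident_cond_def by auto
    then show ?thesis unfolding ident_cond_def using bequiv_trans by blast
  qed
qed

lemma ident_cond_uniq:
  assumes "goodS (\<beta>, V)" "ident_cond (\<beta>, V) y (\<beta>, V) y'"
  shows "y = y'"
proof -
  have cb: "is_chart \<beta>" using assms unfolding goodS_def by auto
  show ?thesis
  proof (cases "y \<in> ran \<beta>")
    case True
    then have "y \<notin> rel_bdry V (ran \<beta>)" using goodS_bdry[OF assms(1)] by blast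
    then have "transition \<beta> \<beta> y = y'" using assms(2) unfolding ident_cond_def by auto
    then show ?thesis using True chart_facts(4)[OF cb] by (simp add: transition_def)
  next
    case False
    then have y: "y \<in> rel_bdry V (ran \<beta>)" and y': "y' \<in> rel_bdry V (ran \<beta>)"
      and bq: "bequiv (\<beta>, V, {y}) (\<beta>, V, {y'})"
      using assms(2) unfolding ident_cond_def by auto
    obtain m where m: "\<forall>i. m i \<in> dom \<beta>" "(\<lambda>i. chart_fun \<beta> (m i)) \<longlonglongrightarrow> y"
      using seq_to_closure[OF cb goodS_bdry(2)[OF assms(1) y]] by blast
    have "covers (\<beta>, V, {y'}) (\<beta>, V, {y})" using bq unfolding bequiv_def by simp
    then obtain r where r: "strict_mono r" "acc_point (\<lambda>i. chart_fun \<beta> (m (r i))) y'"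
      using m tendsto_acc unfolding covers_def by fastforce
    have "(\<lambda>i. chart_fun \<beta> (m (r i))) \<longlonglongrightarrow> y"
      using LIMSEQ_subseq_LIMSEQ[OF m(2) r(1)] by (simp add: o_def)
    then show ?thesis using acc_unique r(2) by blast
  qed
qed



lemma S_good:
  assumes "maximal_smooth_atlas A" "Q \<subseteq> EXT A" "s \<in> S_Q A Q"
  shows "goodS s"
proof -
  have ch: "\<And>\<alpha>. \<alpha> \<in> A \<Longrightarrow> is_chart \<alpha>" using assms(1) unfolding maximal_smooth_atlas_def by blast
  from assms(3) consider (P) \<alpha> where "s = (\<alpha>, ran \<alpha>)" "\<alpha> \<in> A" | (E) "s \<in> Q"
    unfolding S_Q_def by blast
  then show ?thesis
  proof cases
    case P then show ?thesis using ch unfolding goodS_def by simp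
  next
    case E
    then have "s \<in> EXT A" using assms(2) by blast
    then show ?thesis using ch unfolding goodS_def EXT_def by auto
  qed
qed

lemma ic_refl: "goodS s \<Longrightarrow> x \<in> Nset s \<Longrightarrow> ident_cond s x s x"
  using ident_cond_refl by (metis prod.collapse)

lemma ic_sym: "goodS s \<Longrightarrow> goodS t \<Longrightarrow> ident_cond s x t y \<Longrightarrow> ident_cond t y s x"
  using ident_cond_sym by (metis prod.collapse)

lemma ic_trans: "goodS s \<Longrightarrow> goodS t \<Longrightarrow> goodS u \<Longrightarrow> ident_cond s x t y \<Longrightarrow> ident_cond t y u z
   \<Longrightarrow> ident_cond s x u z"
  using ident_cond_trans by (metis prod.collapse)

lemma ic_uniq: "goodS t \<Longrightarrow> ident_cond t y t y' \<Longrightarrow> y = y'"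
  using ident_cond_uniq by (metis prod.collapse)

lemma ic_mem: "ident_cond s x t y \<Longrightarrow> x \<in> Nset s \<and> y \<in> Nset t"
  using ident_cond_mem by (metis prod.collapse)

lemma NQ_iff: "(s, x) \<in> N_Q A Q \<longleftrightarrow> s \<in> S_Q A Q \<and> x \<in> Nset s"
  unfolding N_Q_def by simp

lemma NQ_good:
  assumes "maximal_smooth_atlas A" "Q \<subseteq> EXT A" "p \<in> N_Q A Q"
  shows "goodS (fst p)"
  using assms S_good unfolding N_Q_def by auto

lemma ident_refl:
  assumes "maximal_smooth_atlas A" "Q \<subseteq> EXT A" "p \<in> N_Q A Q"
  shows "ident A Q p p"
  using assms NQ_good[OF assms] ic_refl unfolding ident_def N_Q_def by auto

lemma ident_sym:
  assumes "maximal_smooth_atlas A" "Q \<subseteq> EXT A" "ident A Q p p'"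
  shows "ident A Q p' p"
proof -
  have "p \<in> N_Q A Q" "p' \<in> N_Q A Q" using assms(3) unfolding ident_def by auto
  then show ?thesis using assms(3) ic_sym NQ_good[OF assms(1,2)] unfolding ident_def by blast
qed

lemma ident_trans:
  assumes "maximal_smooth_atlas A" "Q \<subseteq> EXT A" "ident A Q p p'" "ident A Q p' p''"
  shows "ident A Q p p''"
proof -
  have "p \<in> N_Q A Q" "p' \<in> N_Q A Q" "p'' \<in> N_Q A Q" using assms(3,4) unfolding ident_def by auto
  then show ?thesis using assms(3,4) ic_trans[of "fst p" "fst p'" "fst p''"] NQ_good[OF assms(1,2)]
    unfolding ident_def by blast
qed

lemma equiv_ident:
  assumes "maximal_smooth_atlas A" "Q \<subseteq> EXT A" "p \<in> N_Q A Q" "equivclp (ident A Q) p p'"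
  shows "ident A Q p p'"
  using assms(4)
proof (induction rule: equivclp_induct)
  case base
  then show ?case using ident_refl[OF assms(1-3)] .
next
  case (step y z)
  from step(2) have "ident A Q y z"
    using ident_sym[OF assms(1,2)] by blast
  then show ?case using ident_trans[OF assms(1,2) step(3)] by blast
qed

lemma qmap_eq:
  assumes "maximal_smooth_atlas A" "Q \<subseteq> EXT A" "p \<in> N_Q A Q" "p' \<in> N_Q A Q"
  shows "qmap A Q p = qmap A Q p' \<longleftrightarrow> ident A Q p p'"
proof
  assume "qmap A Q p = qmap A Q p'"
  moreover have "p' \<in> qmap A Q p'" using assms(4) unfolding qmap_def by (simp add: equivclp_refl)
  ultimately have "p' \<in> qmap A Q p" by simp
  then have "equivclp (ident A Q) p p'" unfolding qmap_def by simp
  then show "ident A Q p p'" using equiv_ident[OF assms(1-3)] by blast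
next
  assume "ident A Q p p'"
  then have e: "equivclp (ident A Q) p p'" by (rule r_into_equivclp)
  show "qmap A Q p = qmap A Q p'" unfolding qmap_def
  proof (intro Collect_cong conj_cong refl iffI)
    fix z
    assume "equivclp (ident A Q) p z"
    then show "equivclp (ident A Q) p' z" using equivclp_trans[OF equivclp_sym[OF e]] by blast
  next
    fix z
    assume "equivclp (ident A Q) p' z"
    then show "equivclp (ident A Q) p z" using equivclp_trans[OF e] by blast
  qed
qed

lemma qmap_eq2:
  assumes "maximal_smooth_atlas A" "Q \<subseteq> EXT A" "s \<in> S_Q A Q" "t \<in> S_Q A Q"
    "x \<in> Nset s" "y \<in> Nset t"
  shows "qmap A Q (s, x) = qmap A Q (t, y) \<longleftrightarrow> ident_cond s x t y"
  using qmap_eq[OF assms(1,2), of "(s,x)" "(t,y)"] assms unfolding ident_def N_Q_def by simp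



lemma close_seq:
  fixes f g :: "nat \<Rightarrow> 'a::metric_space"
  assumes "\<forall>n. dist (f n) (g n) < inverse (real (Suc n))" "g \<longlonglongrightarrow> a"
  shows "f \<longlonglongrightarrow> a"
proof -
  have g0: "(\<lambda>n. dist (g n) a) \<longlonglongrightarrow> 0" using assms(2) tendsto_dist_iff by blast
  have s0: "(\<lambda>n. inverse (real (Suc n)) + dist (g n) a) \<longlonglongrightarrow> 0"
    by (rule tendsto_add_zero[OF LIMSEQ_inverse_real_of_nat g0])
  have "\<forall>n. norm (dist (f n) a) \<le> inverse (real (Suc n)) + dist (g n) a"
  proof
    fix n
    have "dist (f n) a \<le> dist (f n) (g n) + dist (g n) a" by (rule dist_triangle)
    then show "norm (dist (f n) a) \<le> inverse (real (Suc n)) + dist (g n) a"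
      using assms(1)[rule_format, of n] by simp
  qed
  then have "(\<lambda>n. dist (f n) a) \<longlonglongrightarrow> 0"
    by (intro Lim_null_comparison[OF _ s0]) simp
  then show ?thesis using tendsto_dist_iff by blast
qed

lemma conv_lemma:
  assumes gs: "goodS (\<alpha>, U)" and gt: "goodS (\<beta>, V)" and ic: "ident_cond (\<alpha>, U) x (\<beta>, V) y"
    and m: "\<forall>i. m i \<in> dom \<alpha> \<and> m i \<in> dom \<beta>" and lim: "(\<lambda>i. chart_fun \<alpha> (m i)) \<longlonglongrightarrow> x"
  shows "(\<lambda>i. chart_fun \<beta> (m i)) \<longlonglongrightarrow> y"
proof -
  have ca: "is_chart \<alpha>" and cb: "is_chart \<beta>" using gs gt unfolding goodS_def by auto
  show ?thesis
  proof (cases "x \<in> ran \<alpha> \<and> y \<in> ran \<beta> \<and> x \<in> overlap_img \<alpha> \<beta> \<and> transition \<alpha> \<beta> x = y")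
    case True
    have inov: "\<forall>i. chart_fun \<alpha> (m i) \<in> overlap_img \<alpha> \<beta>" using m unfolding overlap_img_def by blast
    have H: "\<And>u a. a \<in> overlap_img \<alpha> \<beta> \<Longrightarrow> (\<forall>n. u n \<in> overlap_img \<alpha> \<beta>) \<Longrightarrow> u \<longlonglongrightarrow> a \<Longrightarrow>
       (transition \<alpha> \<beta> \<circ> u) \<longlonglongrightarrow> transition \<alpha> \<beta> a"
      using transition_cont[OF ca cb] unfolding continuous_on_sequentially by blast
    have "(transition \<alpha> \<beta> \<circ> (\<lambda>i. chart_fun \<alpha> (m i))) \<longlonglongrightarrow> transition \<alpha> \<beta> x"
      using H[of x "\<lambda>i. chart_fun \<alpha> (m i)"] inov True lim by simp
    moreover have "(transition \<alpha> \<beta> \<circ> (\<lambda>i. chart_fun \<alpha> (m i))) = (\<lambda>i. chart_fun \<beta> (m i))"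
      using m chart_facts(3)[OF ca] by (auto simp: transition_def)
    ultimately show ?thesis using True by simp
  next
    case False
    then have bq: "bequiv (\<alpha>, U, {x}) (\<beta>, V, {y})" using ic unfolding ident_cond_def by auto
    then have cov: "covers (\<beta>, V, {y}) (\<alpha>, U, {x})" unfolding bequiv_def by simp
    have C: "\<And>z. (\<forall>i. z i \<in> dom \<alpha>) \<Longrightarrow> acc_point (\<lambda>i. chart_fun \<alpha> (z i)) x \<Longrightarrow>
        (\<exists>r. strict_mono r \<and> (\<forall>i. z (r i) \<in> dom \<beta>) \<and> acc_point (\<lambda>i. chart_fun \<beta> (z (r i))) y)"
      using cov unfolding covers_def by simp
    show ?thesis
    proof (rule ccontr)
      assume "\<not> (\<lambda>i. chart_fun \<beta> (m i)) \<longlonglongrightarrow> y"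
      then obtain e where e: "e > 0" "\<not> eventually (\<lambda>i. dist (chart_fun \<beta> (m i)) y < e) sequentially"
        unfolding tendsto_iff by blast
      obtain r :: "nat \<Rightarrow> nat" where
        r: "strict_mono r" "\<forall>n. \<not> dist (chart_fun \<beta> (m (r n))) y < e"
        using not_eventually_sequentiallyD[OF e(2)] by auto
      have "((\<lambda>i. chart_fun \<alpha> (m i)) \<circ> r) \<longlonglongrightarrow> x" by (rule LIMSEQ_subseq_LIMSEQ[OF lim r(1)])
      then have "acc_point (\<lambda>i. chart_fun \<alpha> (m (r i))) x" using tendsto_acc by (simp add: o_def)
      moreover have "\<forall>i. m (r i) \<in> dom \<alpha>" using m by blast
      ultimately obtain r2 where r2: "acc_point (\<lambda>i. chart_fun \<beta> (m (r (r2 i)))) y"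
        using C[of "\<lambda>i. m (r i)"] by blast
      have "frequently (\<lambda>i. chart_fun \<beta> (m (r (r2 i))) \<in> ball y e) sequentially"
        using r2 e(1) open_ball[of y e] centre_in_ball[of y e] unfolding acc_point_def by blast
      then obtain i where "chart_fun \<beta> (m (r (r2 i))) \<in> ball y e" using frequently_ex by blast
      then show False using r(2) by (simp add: dist_commute)
    qed
  qed
qed

lemma approx_lemma:
  assumes gs: "goodS (\<alpha>, U)" and gt: "goodS (\<beta>, V)" and ic: "ident_cond (\<alpha>, U) x (\<beta>, V) y"
    and e: "e > 0"
  shows "\<exists>m. m \<in> dom \<alpha> \<and> m \<in> dom \<beta> \<and> dist (chart_fun \<alpha> m) x < e \<and> dist (chart_fun \<beta> m) y < e"
proof -
  have ca: "is_chart \<alpha>" and cb: "is_chart \<beta>" using gs gt unfolding goodS_def by auto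
  show ?thesis
  proof (cases "x \<in> ran \<alpha> \<and> y \<in> ran \<beta> \<and> x \<in> overlap_img \<alpha> \<beta> \<and> transition \<alpha> \<beta> x = y")
    case True
    then have "chart_inv \<alpha> x \<in> dom \<alpha>" "chart_inv \<alpha> x \<in> dom \<beta>" "chart_fun \<alpha> (chart_inv \<alpha> x) = x"
      "chart_fun \<beta> (chart_inv \<alpha> x) = y"
      using overlap_iff[OF ca] chart_inv_in[OF ca] chart_facts(4)[OF ca] by (auto simp: transition_def)
    then show ?thesis using e by (intro exI[of _ "chart_inv \<alpha> x"]) simp
  next
    case False
    then have xb: "x \<in> rel_bdry U (ran \<alpha>)" and bq: "bequiv (\<alpha>, U, {x}) (\<beta>, V, {y})"
      using ic unfolding ident_cond_def by auto
    then have cov: "covers (\<beta>, V, {y}) (\<alpha>, U, {x})" unfolding bequiv_def by simp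
    have C: "\<And>z. (\<forall>i. z i \<in> dom \<alpha>) \<Longrightarrow> acc_point (\<lambda>i. chart_fun \<alpha> (z i)) x \<Longrightarrow>
        (\<exists>r. strict_mono r \<and> (\<forall>i. z (r i) \<in> dom \<beta>) \<and> acc_point (\<lambda>i. chart_fun \<beta> (z (r i))) y)"
      using cov unfolding covers_def by simp
    obtain m where m: "\<forall>i. m i \<in> dom \<alpha>" "(\<lambda>i. chart_fun \<alpha> (m i)) \<longlonglongrightarrow> x"
      using seq_to_closure[OF ca goodS_bdry(2)[OF gs xb]] by blast
    obtain r where r: "strict_mono r" "\<forall>i. m (r i) \<in> dom \<beta>" "acc_point (\<lambda>i. chart_fun \<beta> (m (r i))) y"
      using C[OF m(1) tendsto_acc[OF m(2)]] by blast
    have "((\<lambda>i. chart_fun \<alpha> (m i)) \<circ> r) \<longlonglongrightarrow> x" by (rule LIMSEQ_subseq_LIMSEQ[OF m(2) r(1)])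
    then have ev: "eventually (\<lambda>i. dist (chart_fun \<alpha> (m (r i))) x < e) sequentially"
      using e unfolding tendsto_iff by (simp add: o_def)
    have fr: "frequently (\<lambda>i. chart_fun \<beta> (m (r i)) \<in> ball y e) sequentially"
      using r(3) e open_ball[of y e] centre_in_ball[of y e] unfolding acc_point_def by blast
    have "frequently (\<lambda>i. dist (chart_fun \<alpha> (m (r i))) x < e \<and> chart_fun \<beta> (m (r i)) \<in> ball y e) sequentially"
      by (rule frequently_mp[OF eventually_mono[OF ev] fr]) auto
    then obtain i where "dist (chart_fun \<alpha> (m (r i))) x < e" "chart_fun \<beta> (m (r i)) \<in> ball y e"
      using frequently_ex by blast
    then show ?thesis using m(1) r(2) by (intro exI[of _ "m (r i)"]) (simp add: dist_commute)
  qed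
qed



lemma D_iff:
  assumes M: "maximal_smooth_atlas A" and E: "Q \<subseteq> EXT A" and s: "s \<in> S_Q A Q" and t: "t \<in> S_Q A Q"
  shows "x \<in> Dset A Q s t \<longleftrightarrow> (\<exists>y. ident_cond s x t y)"
proof
  assume "x \<in> Dset A Q s t"
  then have x: "x \<in> Nset s" and "qmap A Q (s, x) \<in> (\<lambda>y. qmap A Q (t, y)) ` Nset t"
    unfolding Dset_def by auto
  then obtain y where y: "y \<in> Nset t" "qmap A Q (s, x) = qmap A Q (t, y)" by auto
  then show "\<exists>y. ident_cond s x t y" using qmap_eq2[OF M E s t x y(1)] by blast
next
  assume "\<exists>y. ident_cond s x t y"
  then obtain y where y: "ident_cond s x t y" by blast
  then have xy: "x \<in> Nset s" "y \<in> Nset t" using ic_mem by blast+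
  then have "qmap A Q (s, x) = qmap A Q (t, y)" using qmap_eq2[OF M E s t] y by blast
  then show "x \<in> Dset A Q s t" unfolding Dset_def using xy by auto
qed

lemma ic_unique2:
  assumes M: "maximal_smooth_atlas A" and E: "Q \<subseteq> EXT A" and s: "s \<in> S_Q A Q" and t: "t \<in> S_Q A Q"
    and "ident_cond s x t y" "ident_cond s x t y'"
  shows "y = y'"
proof -
  have gs: "goodS s" and gt: "goodS t" using S_good[OF M E] s t by auto
  have "ident_cond t y s x" using ic_sym[OF gs gt assms(5)] .
  then have "ident_cond t y t y'" using ic_trans[OF gt gs gt _ assms(6)] by blast
  then show ?thesis using ic_uniq[OF gt] by blast
qed

lemma tb_eq:
  assumes M: "maximal_smooth_atlas A" and E: "Q \<subseteq> EXT A" and s: "s \<in> S_Q A Q" and t: "t \<in> S_Q A Q"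
    and ic: "ident_cond s x t y"
  shows "trans_bar A Q s t x = y"
  unfolding trans_bar_def
proof (rule the_equality)
  have xy: "x \<in> Nset s" "y \<in> Nset t" using ic ic_mem by blast+
  show "y \<in> Nset t \<and> qmap A Q (t, y) = qmap A Q (s, x)"
    using qmap_eq2[OF M E s t xy] ic xy by simp
next
  fix y' assume h: "y' \<in> Nset t \<and> qmap A Q (t, y') = qmap A Q (s, x)"
  have "x \<in> Nset s" using ic ic_mem by blast
  then have "ident_cond s x t y'" using qmap_eq2[OF M E s t] h by metis
  then show "y' = y" using ic_unique2[OF M E s t ic] by simp
qed

lemma tb_cont:
  assumes M: "maximal_smooth_atlas A" and E: "Q \<subseteq> EXT A" and s: "(\<alpha>, U) \<in> S_Q A Q" and t: "(\<beta>, V) \<in> S_Q A Q"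
  shows "continuous_on (Dset A Q (\<alpha>, U) (\<beta>, V)) (trans_bar A Q (\<alpha>, U) (\<beta>, V))"
proof (rule continuous_on_sequentiallyI)
  let ?D = "Dset A Q (\<alpha>, U) (\<beta>, V)" and ?tb = "trans_bar A Q (\<alpha>, U) (\<beta>, V)"
  have gs: "goodS (\<alpha>, U)" and gt: "goodS (\<beta>, V)" using S_good[OF M E] s t by auto
  have icx: "\<And>x. x \<in> ?D \<Longrightarrow> ident_cond (\<alpha>, U) x (\<beta>, V) (?tb x)"
  proof -
    fix x assume "x \<in> ?D"
    then obtain y where y: "ident_cond (\<alpha>, U) x (\<beta>, V) y" using D_iff[OF M E s t] by blast
    then show "ident_cond (\<alpha>, U) x (\<beta>, V) (?tb x)" using tb_eq[OF M E s t y] by simp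
  qed
  fix u a assume u: "\<forall>n. u n \<in> ?D" and a: "a \<in> ?D" and lim: "u \<longlonglongrightarrow> a"
  have "\<forall>n. \<exists>m. (m \<in> dom \<alpha> \<and> m \<in> dom \<beta>) \<and> dist (chart_fun \<alpha> m) (u n) < inverse (real (Suc n))
        \<and> dist (chart_fun \<beta> m) (?tb (u n)) < inverse (real (Suc n))"
  proof
    fix n
    show "\<exists>m. (m \<in> dom \<alpha> \<and> m \<in> dom \<beta>) \<and> dist (chart_fun \<alpha> m) (u n) < inverse (real (Suc n))
        \<and> dist (chart_fun \<beta> m) (?tb (u n)) < inverse (real (Suc n))"
      using approx_lemma[OF gs gt icx[OF u[rule_format, of n]], of "inverse (real (Suc n))"] by auto
  qed
  then obtain M where Mm: "\<forall>n. (M n \<in> dom \<alpha> \<and> M n \<in> dom \<beta>) \<and> dist (chart_fun \<alpha> (M n)) (u n) < inverse (real (Suc n))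
        \<and> dist (chart_fun \<beta> (M n)) (?tb (u n)) < inverse (real (Suc n))"
    by (rule choice[THEN exE]) blast
  have "\<forall>n. dist (chart_fun \<alpha> (M n)) (u n) < inverse (real (Suc n))" using Mm by blast
  then have l1: "(\<lambda>n. chart_fun \<alpha> (M n)) \<longlonglongrightarrow> a" by (rule close_seq[OF _ lim])
  have l2: "(\<lambda>n. chart_fun \<beta> (M n)) \<longlonglongrightarrow> ?tb a"
    using conv_lemma[OF gs gt icx[OF a] _ l1] Mm by blast
  have "\<forall>n. dist (?tb (u n)) (chart_fun \<beta> (M n)) < inverse (real (Suc n))"
    using Mm by (simp add: dist_commute)
  then show "(\<lambda>n. ?tb (u n)) \<longlonglongrightarrow> ?tb a" by (rule close_seq[OF _ l2])
qed



theorem mainTheorem5: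
  fixes A :: "('m::{t2_space, second_countable_topology}, 'n::finite) chart set"
    and Q :: "(('m, 'n) chart \<times> (real ^ 'n) set) set"
    and \<alpha> \<beta> :: "('m, 'n) chart" and U V :: "(real ^ 'n) set"
  assumes "maximal_smooth_atlas A"
    and "Q \<subseteq> EXT A"
    and "(\<alpha>, U) \<in> S_Q A Q" and "(\<beta>, V) \<in> S_Q A Q"
  shows "(\<forall>x \<in> Dset A Q (\<alpha>, U) (\<beta>, V).
            \<exists>!y. y \<in> Nset (\<beta>, V) \<and> qmap A Q ((\<beta>, V), y) = qmap A Q ((\<alpha>, U), x))
    \<and> (\<exists>g. homeomorphism (Dset A Q (\<alpha>, U) (\<beta>, V)) (Dset A Q (\<beta>, V) (\<alpha>, U))
              (trans_bar A Q (\<alpha>, U) (\<beta>, V)) g)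
    \<and> overlap_img \<alpha> \<beta> \<subseteq> Dset A Q (\<alpha>, U) (\<beta>, V)
    \<and> (\<forall>x \<in> overlap_img \<alpha> \<beta>. trans_bar A Q (\<alpha>, U) (\<beta>, V) x = transition \<alpha> \<beta> x)
    \<and> (\<forall>x \<in> Nset (\<alpha>, U). \<forall>y \<in> Nset (\<beta>, V).
         ((x \<in> Dset A Q (\<alpha>, U) (\<beta>, V) \<and> trans_bar A Q (\<alpha>, U) (\<beta>, V) x = y)
            \<longleftrightarrow> qmap A Q ((\<alpha>, U), x) = qmap A Q ((\<beta>, V), y))
       \<and> (qmap A Q ((\<alpha>, U), x) = qmap A Q ((\<beta>, V), y) \<longleftrightarrow> ident_cond (\<alpha>, U) x (\<beta>, V) y))"
proof -
  note M = assms(1) and E = assms(2) and s = assms(3) and t = assms(4)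
  let ?s = "(\<alpha>, U)" and ?t = "(\<beta>, V)"
  have gs: "goodS ?s" and gt: "goodS ?t" using S_good[OF M E] s t by auto
  have ca: "is_chart \<alpha>" and cb: "is_chart \<beta>" using gs gt unfolding goodS_def by auto
  have P1: "\<forall>x \<in> Dset A Q ?s ?t. \<exists>!y. y \<in> Nset ?t \<and> qmap A Q (?t, y) = qmap A Q (?s, x)"
  proof
    fix x assume "x \<in> Dset A Q ?s ?t"
    then obtain y where y: "ident_cond ?s x ?t y" using D_iff[OF M E s t] by blast
    have xy: "x \<in> Nset ?s" "y \<in> Nset ?t" using y ic_mem by blast+
    show "\<exists>!y. y \<in> Nset ?t \<and> qmap A Q (?t, y) = qmap A Q (?s, x)"
    proof (rule ex1I[of _ y])
      show "y \<in> Nset ?t \<and> qmap A Q (?t, y) = qmap A Q (?s, x)"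
        using qmap_eq2[OF M E s t xy] y xy by simp
    next
      fix y' assume h: "y' \<in> Nset ?t \<and> qmap A Q (?t, y') = qmap A Q (?s, x)"
      then have "ident_cond ?s x ?t y'" using qmap_eq2[OF M E s t xy(1)] by metis
      then show "y' = y" using ic_unique2[OF M E s t y] by simp
    qed
  qed
  have P2: "homeomorphism (Dset A Q ?s ?t) (Dset A Q ?t ?s) (trans_bar A Q ?s ?t) (trans_bar A Q ?t ?s)"
  proof (rule homeomorphismI)
    show "continuous_on (Dset A Q ?s ?t) (trans_bar A Q ?s ?t)" by (rule tb_cont[OF M E s t])
    show "continuous_on (Dset A Q ?t ?s) (trans_bar A Q ?t ?s)" by (rule tb_cont[OF M E t s])
    have K: "\<And>x. x \<in> Dset A Q ?s ?t \<Longrightarrow> trans_bar A Q ?s ?t x \<in> Dset A Q ?t ?s \<and>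
              trans_bar A Q ?t ?s (trans_bar A Q ?s ?t x) = x"
    proof -
      fix x assume "x \<in> Dset A Q ?s ?t"
      then obtain y where y: "ident_cond ?s x ?t y" using D_iff[OF M E s t] by blast
      have y2: "ident_cond ?t y ?s x" using ic_sym[OF gs gt y] .
      show "trans_bar A Q ?s ?t x \<in> Dset A Q ?t ?s \<and> trans_bar A Q ?t ?s (trans_bar A Q ?s ?t x) = x"
        using tb_eq[OF M E s t y] tb_eq[OF M E t s y2] D_iff[OF M E t s] y2 by auto
    qed
    have K2: "\<And>x. x \<in> Dset A Q ?t ?s \<Longrightarrow> trans_bar A Q ?t ?s x \<in> Dset A Q ?s ?t \<and>
              trans_bar A Q ?s ?t (trans_bar A Q ?t ?s x) = x"
    proof -
      fix x assume "x \<in> Dset A Q ?t ?s"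
      then obtain y where y: "ident_cond ?t x ?s y" using D_iff[OF M E t s] by blast
      have y2: "ident_cond ?s y ?t x" using ic_sym[OF gt gs y] .
      show "trans_bar A Q ?t ?s x \<in> Dset A Q ?s ?t \<and> trans_bar A Q ?s ?t (trans_bar A Q ?t ?s x) = x"
        using tb_eq[OF M E t s y] tb_eq[OF M E s t y2] D_iff[OF M E s t] y2 by auto
    qed
    show "trans_bar A Q ?s ?t ` Dset A Q ?s ?t \<subseteq> Dset A Q ?t ?s" using K by blast
    show "trans_bar A Q ?t ?s ` Dset A Q ?t ?s \<subseteq> Dset A Q ?s ?t" using K2 by blast
    show "\<And>x. x \<in> Dset A Q ?s ?t \<Longrightarrow> trans_bar A Q ?t ?s (trans_bar A Q ?s ?t x) = x" using K by blast
    show "\<And>x. x \<in> Dset A Q ?t ?s \<Longrightarrow> trans_bar A Q ?s ?t (trans_bar A Q ?t ?s x) = x" using K2 by blast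
  qed
  have ov: "\<And>x. x \<in> overlap_img \<alpha> \<beta> \<Longrightarrow> ident_cond ?s x ?t (transition \<alpha> \<beta> x)"
  proof -
    fix x assume x: "x \<in> overlap_img \<alpha> \<beta>"
    then have "x \<in> ran \<alpha>" "chart_inv \<alpha> x \<in> dom \<beta>" using overlap_iff[OF ca] by auto
    then have "transition \<alpha> \<beta> x \<in> ran \<beta>" using chart_fun_in[OF cb] by (simp add: transition_def)
    then show "ident_cond ?s x ?t (transition \<alpha> \<beta> x)" using x \<open>x \<in> ran \<alpha>\<close>
      unfolding ident_cond_def by simp
  qed
  have P3: "overlap_img \<alpha> \<beta> \<subseteq> Dset A Q ?s ?t" using ov D_iff[OF M E s t] by blast
  have P4: "\<forall>x \<in> overlap_img \<alpha> \<beta>. trans_bar A Q ?s ?t x = transition \<alpha> \<beta> x"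
    using ov tb_eq[OF M E s t] by blast
  have P5: "\<forall>x \<in> Nset ?s. \<forall>y \<in> Nset ?t.
         ((x \<in> Dset A Q ?s ?t \<and> trans_bar A Q ?s ?t x = y)
            \<longleftrightarrow> qmap A Q (?s, x) = qmap A Q (?t, y))
       \<and> (qmap A Q (?s, x) = qmap A Q (?t, y) \<longleftrightarrow> ident_cond ?s x ?t y)"
  proof (intro ballI conjI)
    fix x y assume x: "x \<in> Nset ?s" and y: "y \<in> Nset ?t"
    show Q2: "qmap A Q (?s, x) = qmap A Q (?t, y) \<longleftrightarrow> ident_cond ?s x ?t y"
      by (rule qmap_eq2[OF M E s t x y])
    show "(x \<in> Dset A Q ?s ?t \<and> trans_bar A Q ?s ?t x = y) \<longleftrightarrow> qmap A Q (?s, x) = qmap A Q (?t, y)"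
    proof
      assume h: "x \<in> Dset A Q ?s ?t \<and> trans_bar A Q ?s ?t x = y"
      then obtain y0 where y0: "ident_cond ?s x ?t y0" using D_iff[OF M E s t] by blast
      then have "y0 = y" using tb_eq[OF M E s t y0] h by simp
      then show "qmap A Q (?s, x) = qmap A Q (?t, y)" using Q2 y0 by simp
    next
      assume "qmap A Q (?s, x) = qmap A Q (?t, y)"
      then have ic: "ident_cond ?s x ?t y" using Q2 by simp
      then show "x \<in> Dset A Q ?s ?t \<and> trans_bar A Q ?s ?t x = y"
        using D_iff[OF M E s t] tb_eq[OF M E s t ic] by blast
    qed
  qed
  show ?thesis using P1 P2 P3 P4 P5 by blast
qed


end
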